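(* Let $\gamma\in\mathbb{R}$ with $\sin\gamma\neq0$, $q=e^{\mathrm{i}\gamma}$, $[x]_q=\sin(\gamma x)/\sin\gamma$, and $\varphi\in\mathbb{C}$ with $\sin\varphi\neq0$. For $s\in\mathbb{C}$, on the space $\mathfrak{S}_s$ with orthonormal basis $\{|k\rangle:k\in\mathbb{Z}_{\ge0}\}$ let $\mathbf{s}^z_s=\sum_{k\ge0}(s-k)|k\rangle\langle k|$, $\mathbf{s}^+_s=\sum_{k\ge0}[k+1]_q|k\rangle\langle k+1|$, $\mathbf{s}^-_s=\sum_{k\ge0}[2s-k]_q|k+1\rangle\langle k|$, and define the Lax operator $\mathbf{L}(\varphi,s)=\sum_{i,j=1}^2 e^{ij}\otimes\mathbf{L}_{ij}(\varphi,s)$ with $$\begin{pmatrix}\mathbf{L}_{11}&\mathbf{L}_{12}\\ \mathbf{L}_{21}&\mathbf{L}_{22}\end{pmatrix}=\begin{pmatrix}\sin(\varphi+\gamma\mathbf{s}^z_s)&(\sin\gamma)\mathbf{s}^-_s\\ (\sin\gamma)\mathbf{s}^+_s&\sin(\varphi-\gamma\mathbf{s}^z_s)\end{pmatrix},$$ and the operator on $(\mathbb{C}^2)^{\otimes n}$ $$W_n(\varphi,s)=\sum_{i_1,j_1,\dots,i_n,j_n}\langle0|\mathbf{L}_{i_1j_1}(\varphi,s)\cdots\mathbf{L}_{i_nj_n}(\varphi,s)|0\rangle\,e^{i_1j_1}\otimes\cdots\otimes e^{i_nj_n}.$$ Next let $\widetilde{\mathfrak{S}}$ be the space with orthonormal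 basis $\{|\mathrm{L}\rangle,|\mathrm{R}\rangle,|1\rangle,|2\rangle,\dots\}$, let $\tilde{\mathbf{s}}^z=\sum_{k\ge1}(-k)|k\rangle\langle k|$, $\tilde{\mathbf{s}}^+=\sum_{k\ge1}[k+1]_q|k\rangle\langle k+1|$, $\tilde{\mathbf{s}}^-=\sum_{k\ge1}[-k]_q|k+1\rangle\langle k|$ (all vanishing on $|\mathrm{L}\rangle,|\mathrm{R}\rangle$, and with $\cos(\gamma\tilde{\mathbf{s}}^z)$, $\sin(\gamma\tilde{\mathbf{s}}^z)$ acting on $|k\rangle$, $k\ge1$, by $\cos(\gamma k)$, $-\sin(\gamma k)$ and vanishing on $|\mathrm{L}\rangle,|\mathrm{R}\rangle$), and set \begin{align*} \widetilde{\mathbf{L}}^0(\varphi)&=|\mathrm{L}\rangle\langle\mathrm{L}|+|\mathrm{R}\rangle\langle\mathrm{R}|+\cos(\gamma\tilde{\mathbf{s}}^z),& \widetilde{\mathbf{L}}^z(\varphi)&=\cot\varphi\,\sin(\gamma\tilde{\mathbf{s}}^z),\\ \widetilde{\mathbf{L}}^+(\varphi)&=|1\rangle\langle\mathrm{R}|+\tfrac{\sin\gamma}{\sin\varphi}\tilde{\mathbf{s}}^-,& \widetilde{\mathbf{L}}^-(\varphi)&=|\mathrm{L}\rangle\langle1|+\tfrac{\sin\gamma}{\sin\varphi}\tilde{\mathbf{s}}^+, \end{align*} and $Z_n(\varphi)=\sum_{\alpha_1,\dots,\alpha_n\in\{0,+,-,z\}}\langle\mathrm{L}|\widetilde{\mathbf{L}}^{\alpha_1}(\varphi)\cdots\widetilde{\mathbf{L}}^{\alpha_n}(\varphi)|\mathrm{R}\rangle\,\sigma^{\alpha_1}\otimes\cdots\otimes\sigma^{\alpha_n}$.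 Then $$\frac{1}{(\sin\varphi)^n}\,\partial_s W_n(\varphi,s)\Big|_{s=0}=\frac{2\gamma\sin\gamma}{(\sin\varphi)^2}Z_n(\varphi)+\gamma\cot\varphi\,M_n,$$ where $M_n=\sum_{x=1}^n\mathbb{1}_{2^{x-1}}\otimes\sigma^z\otimes\mathbb{1}_{2^{n-x}}$.
   Context: $e^{ij}=|i\rangle\langle j|$ are $2\times2$ matrix units; $\sigma^0=\mathbb{1}_2$, $\sigma^+=e^{12}$, $\sigma^-=e^{21}$, $\sigma^z=e^{11}-e^{22}$. Functions of the diagonal operator $\mathbf{s}^z_s$ (such as $\sin(\varphi\pm\gamma\mathbf{s}^z_s)$) act diagonally on the basis $|k\rangle$. $n\ge1$. *)

theory Defs
  imports Complex_Main
begin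

text \<open>Vectors in the infinite-dimensional spaces are represented by their coordinate
functions (formal sequences); the (band) operators below are defined by their action on
coordinates, which is exactly the action of the stated sums of matrix units.
Operators on (C^2)^{\<otimes>n} are represented by their matrix entries, indexed by
lists of length n with entries in {1,2}.\<close>

definition qnum :: "real \<Rightarrow> complex \<Rightarrow> complex" where
  "qnum \<gamma> x = sin (complex_of_real \<gamma> * x) / complex_of_real (sin \<gamma>)"

definition emat :: "nat \<Rightarrow> nat \<Rightarrow> (nat \<Rightarrow> nat \<Rightarrow> complex)" where
  "emat i j = (\<lambda>a b. if a = i \<and> b = j then 1 else 0)"

definition idxs :: "nat \<Rightarrow> nat list set" where
  "idxs n = {xs. length xs = n \<and> set xs \<subseteq> {1,2}}"

definition tensor_entry :: "(nat \<Rightarrow> nat \<Rightarrow> complex) list \<Rightarrow> nat list \<Rightarrow> nat list \<Rightarrow> complex" where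
  "tensor_entry As a b = (\<Prod>m<length As. (As ! m) (a ! m) (b ! m))"

datatype alpha = A0 | Ap | Am | Az

definition sigma :: "alpha \<Rightarrow> (nat \<Rightarrow> nat \<Rightarrow> complex)" where
  "sigma \<alpha> = (case \<alpha> of
      A0 \<Rightarrow> (\<lambda>a b. emat 1 1 a b + emat 2 2 a b)
    | Ap \<Rightarrow> emat 1 2
    | Am \<Rightarrow> emat 2 1
    | Az \<Rightarrow> (\<lambda>a b. emat 1 1 a b - emat 2 2 a b))"

definition sz_diag :: "complex \<Rightarrow> nat \<Rightarrow> complex" where
  "sz_diag s k = s - of_nat k"

definition splus :: "real \<Rightarrow> complex \<Rightarrow> (nat \<Rightarrow> complex) \<Rightarrow> (nat \<Rightarrow> complex)" where
  "splus \<gamma> s v = (\<lambda>k. qnum \<gamma> (of_nat k + 1) * v (k + 1))"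

definition sminus :: "real \<Rightarrow> complex \<Rightarrow> (nat \<Rightarrow> complex) \<Rightarrow> (nat \<Rightarrow> complex)" where
  "sminus \<gamma> s v = (\<lambda>k. if k = 0 then 0 else qnum \<gamma> (2 * s - of_nat (k - 1)) * v (k - 1))"

definition Lop :: "real \<Rightarrow> complex \<Rightarrow> complex \<Rightarrow> nat \<Rightarrow> nat \<Rightarrow> (nat \<Rightarrow> complex) \<Rightarrow> (nat \<Rightarrow> complex)" where
  "Lop \<gamma> \<phi> s i j v =
     (if i = 1 \<and> j = 1 then (\<lambda>k. sin (\<phi> + complex_of_real \<gamma> * sz_diag s k) * v k)
      else if i = 1 \<and> j = 2 then (\<lambda>k. complex_of_real (sin \<gamma>) * sminus \<gamma> s v k)
      else if i = 2 \<and> j = 1 then (\<lambda>k. complex_of_real (sin \<gamma>) * splus \<gamma> s v k)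
      else if i = 2 \<and> j = 2 then (\<lambda>k. sin (\<phi> - complex_of_real \<gamma> * sz_diag s k) * v k)
      else (\<lambda>k. 0))"

text \<open>Matrix element <0| A_1 ... A_n |0>.\<close>
definition vac_elem :: "((nat \<Rightarrow> complex) \<Rightarrow> (nat \<Rightarrow> complex)) list \<Rightarrow> complex" where
  "vac_elem As = (foldr (\<circ>) As id) (\<lambda>k. if k = 0 then 1 else 0) 0"

definition Wn :: "real \<Rightarrow> nat \<Rightarrow> complex \<Rightarrow> complex \<Rightarrow> nat list \<Rightarrow> nat list \<Rightarrow> complex" where
  "Wn \<gamma> n \<phi> s = (\<lambda>a b. \<Sum>is\<in>idxs n. \<Sum>js\<in>idxs n.
      vac_elem (map2 (Lop \<gamma> \<phi> s) is js) * tensor_entry (map2 emat is js) a b)"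

text \<open>TK m stands for the basis vector |m+1>.\<close>
datatype tb = TL | TR | TK nat

definition tsz_eig :: "nat \<Rightarrow> complex" where
  "tsz_eig m = - (of_nat m + 1)"  \<comment> \<open>eigenvalue of s~z on |m+1>\<close>

definition tsplus :: "real \<Rightarrow> (tb \<Rightarrow> complex) \<Rightarrow> (tb \<Rightarrow> complex)" where
  "tsplus \<gamma> v = (\<lambda>x. case x of TK m \<Rightarrow> qnum \<gamma> (of_nat m + 2) * v (TK (m + 1)) | _ \<Rightarrow> 0)"

definition tsminus :: "real \<Rightarrow> (tb \<Rightarrow> complex) \<Rightarrow> (tb \<Rightarrow> complex)" where
  "tsminus \<gamma> v = (\<lambda>x. case x of TK m \<Rightarrow> (if m = 0 then 0 else qnum \<gamma> (- of_nat m) * v (TK (m - 1)))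
                                  | _ \<Rightarrow> 0)"

definition tcos :: "real \<Rightarrow> (tb \<Rightarrow> complex) \<Rightarrow> (tb \<Rightarrow> complex)" where
  "tcos \<gamma> v = (\<lambda>x. case x of TK m \<Rightarrow> cos (complex_of_real \<gamma> * tsz_eig m) * v x | _ \<Rightarrow> 0)"

definition tsin :: "real \<Rightarrow> (tb \<Rightarrow> complex) \<Rightarrow> (tb \<Rightarrow> complex)" where
  "tsin \<gamma> v = (\<lambda>x. case x of TK m \<Rightarrow> sin (complex_of_real \<gamma> * tsz_eig m) * v x | _ \<Rightarrow> 0)"

definition Ltil :: "real \<Rightarrow> complex \<Rightarrow> alpha \<Rightarrow> (tb \<Rightarrow> complex) \<Rightarrow> (tb \<Rightarrow> complex)" where
  "Ltil \<gamma> \<phi> \<alpha> v = (case \<alpha> of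
      A0 \<Rightarrow> (\<lambda>x. (if x = TL then v TL else 0) + (if x = TR then v TR else 0) + tcos \<gamma> v x)
    | Az \<Rightarrow> (\<lambda>x. (cos \<phi> / sin \<phi>) * tsin \<gamma> v x)
    | Ap \<Rightarrow> (\<lambda>x. (if x = TK 0 then v TR else 0)
                 + (complex_of_real (sin \<gamma>) / sin \<phi>) * tsminus \<gamma> v x)
    | Am \<Rightarrow> (\<lambda>x. (if x = TL then v (TK 0) else 0)
                 + (complex_of_real (sin \<gamma>) / sin \<phi>) * tsplus \<gamma> v x))"

text \<open>Matrix element <L| A_1 ... A_n |R>.\<close>
definition LR_elem :: "((tb \<Rightarrow> complex) \<Rightarrow> (tb \<Rightarrow> complex)) list \<Rightarrow> complex" where
  "LR_elem As = (foldr (\<circ>) As id) (\<lambda>x. if x = TR then 1 else 0) TL"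

definition Zn :: "real \<Rightarrow> nat \<Rightarrow> complex \<Rightarrow> nat list \<Rightarrow> nat list \<Rightarrow> complex" where
  "Zn \<gamma> n \<phi> = (\<lambda>a b. \<Sum>as\<in>{as. length as = n}.
      LR_elem (map (Ltil \<gamma> \<phi>) as) * tensor_entry (map sigma as) a b)"

definition Mn :: "nat \<Rightarrow> nat list \<Rightarrow> nat list \<Rightarrow> complex" where
  "Mn n = (\<lambda>a b. \<Sum>x=1..n. tensor_entry
      (replicate (x - 1) (sigma A0) @ [sigma Az] @ replicate (n - x) (sigma A0)) a b)"

end

theory Submission
  imports Defs
begin

fun Vs :: "real \<Rightarrow> complex \<Rightarrow> complex \<Rightarrow> (nat\<times>nat) list \<Rightarrow> nat \<Rightarrow> complex" where
  "Vs \<gamma> \<phi> s [] = (\<lambda>k. if k = 0 then 1 else 0)"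
| "Vs \<gamma> \<phi> s ((i,j)#ps) = Lop \<gamma> \<phi> s i j (Vs \<gamma> \<phi> s ps)"

definition Top :: "real \<Rightarrow> complex \<Rightarrow> nat \<Rightarrow> nat \<Rightarrow> (tb \<Rightarrow> complex) \<Rightarrow> (tb \<Rightarrow> complex)" where
  "Top \<gamma> \<phi> i j v = (\<lambda>x. \<Sum>\<alpha>\<in>UNIV. sigma \<alpha> i j * Ltil \<gamma> \<phi> \<alpha> v x)"

fun Ws :: "real \<Rightarrow> complex \<Rightarrow> (nat\<times>nat) list \<Rightarrow> tb \<Rightarrow> complex" where
  "Ws \<gamma> \<phi> [] = (\<lambda>x. if x = TR then 1 else 0)"
| "Ws \<gamma> \<phi> ((i,j)#ps) = Top \<gamma> \<phi> i j (Ws \<gamma> \<phi> ps)"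

fun diagc :: "(nat\<times>nat) list \<Rightarrow> complex" where
  "diagc [] = 1"
| "diagc ((i,j)#ps) = sigma A0 i j * diagc ps"

fun mu :: "(nat\<times>nat) list \<Rightarrow> complex" where
  "mu [] = 0"
| "mu ((i,j)#ps) = sigma A0 i j * mu ps + sigma Az i j * diagc ps"

lemma UNIV_alpha: "(UNIV :: alpha set) = {A0, Ap, Am, Az}"
  using alpha.exhaust by auto

lemma finite_alpha[simp]: "finite (UNIV :: alpha set)"
  by (simp add: UNIV_alpha)

lemma vac_Vs: "foldr (\<circ>) (map (\<lambda>(i,j). Lop \<gamma> \<phi> s i j) ps) id (\<lambda>k. if k = 0 then 1 else 0) = Vs \<gamma> \<phi> s ps"
  by (induction ps) auto

lemma te_cons: "tensor_entry (A # As) (a # as) (b # bs) = A a b * tensor_entry As as bs"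
  unfolding tensor_entry_def by (simp add: prod.lessThan_Suc_shift del: prod.lessThan_Suc)

lemma te_emat: "length is = n \<Longrightarrow> length js = n \<Longrightarrow> length a = n \<Longrightarrow> length b = n \<Longrightarrow>
   tensor_entry (map2 emat is js) a b = (if is = a \<and> js = b then 1 else 0)"
proof (induction n arbitrary: "is" js a b)
  case 0 then show ?case by (simp add: tensor_entry_def)
next
  case (Suc n)
  then obtain i is' j js' a0 a' b0 b' where "is = i#is'" "js = j#js'" "a = a0#a'" "b = b0#b'"
    by (metis length_Suc_conv)
  with Suc show ?case by (auto simp: te_cons emat_def)
qed

lemma Wn_eq: assumes "a \<in> idxs n" "b \<in> idxs n"
  shows "Wn \<gamma> n \<phi> s a b = Vs \<gamma> \<phi> s (zip a b) 0"
proof -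
  have fin: "finite (idxs n)" unfolding idxs_def
    using finite_lists_length_eq[of "{1,2::nat}" n] by (simp add: conj_commute)
  have "Wn \<gamma> n \<phi> s a b = (\<Sum>is\<in>idxs n. \<Sum>js\<in>idxs n.
      vac_elem (map2 (Lop \<gamma> \<phi> s) is js) * (if is = a \<and> js = b then 1 else 0))"
    unfolding Wn_def
    by (intro sum.cong refl, subst te_emat[where n=n]) (use assms in \<open>auto simp: idxs_def\<close>)
  also have "\<dots> = vac_elem (map2 (Lop \<gamma> \<phi> s) a b)"
  proof -
    have "\<And>is js. vac_elem (map2 (Lop \<gamma> \<phi> s) is js) * (if is = a \<and> js = b then 1 else 0)
       = (if is = a then (if js = b then vac_elem (map2 (Lop \<gamma> \<phi> s) a b) else 0) else 0)" by auto
    moreover have "\<And>is. (\<Sum>js\<in>idxs n. (if is = a then (if js = b then vac_elem (map2 (Lop \<gamma> \<phi> s) a b) else 0) else 0))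
        = (if is = a then vac_elem (map2 (Lop \<gamma> \<phi> s) a b) else 0)"
      subgoal for "is" by (cases "is = a") (simp_all add: fin assms)
      done
    ultimately show ?thesis using assms fin by simp
  qed
  also have "\<dots> = Vs \<gamma> \<phi> s (zip a b) 0"
    unfolding vac_elem_def using vac_Vs[of \<gamma> \<phi> s "zip a b"]
    by (simp add: case_prod_unfold)
  finally show ?thesis .
qed

lemma Ltil_lin: "finite I \<Longrightarrow> Ltil \<gamma> \<phi> \<alpha> (\<lambda>y. \<Sum>i\<in>I. c i * f i y) x = (\<Sum>i\<in>I. c i * Ltil \<gamma> \<phi> \<alpha> (f i) x)"
  unfolding Ltil_def tcos_def tsin_def tsplus_def tsminus_def
  by (cases \<alpha>; cases x) (auto simp: sum_distrib_left sum.distrib sum_divide_distrib algebra_simps)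

lemma sum_len_Suc: "(\<Sum>as\<in>{as::alpha list. length as = Suc n}. g as) = (\<Sum>\<alpha>\<in>UNIV. \<Sum>as\<in>{as. length as = n}. g (\<alpha>#as))"
proof -
  have eq: "{as::alpha list. length as = Suc n} = (\<lambda>(\<alpha>,as). \<alpha>#as) ` (UNIV \<times> {as. length as = n})"
    by (auto simp: length_Suc_conv image_iff)
  have inj: "inj_on (\<lambda>(\<alpha>,as). \<alpha>#as) (UNIV \<times> {as::alpha list. length as = n})"
    by (auto simp: inj_on_def)
  have fin: "finite {as::alpha list. length as = n}"
    using finite_lists_length_eq[of "UNIV::alpha set" n] by simp
  show ?thesis unfolding eq sum.reindex[OF inj]
    by (simp add: sum.cartesian_product fin case_prod_unfold)
qed

lemma Zn_gen: "length a = n \<Longrightarrow> length b = n \<Longrightarrow>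
  (\<Sum>as\<in>{as. length as = n}. foldr (\<circ>) (map (Ltil \<gamma> \<phi>) as) id (\<lambda>x. if x = TR then 1 else 0) x
     * tensor_entry (map sigma as) a b) = Ws \<gamma> \<phi> (zip a b) x"
proof (induction n arbitrary: a b x)
  case 0 then show ?case by (simp add: tensor_entry_def)
next
  case (Suc n)
  then obtain a0 a' b0 b' where ab: "a = a0#a'" "b = b0#b'" "length a' = n" "length b' = n"
    by (metis length_Suc_conv)
  have fin: "finite {as::alpha list. length as = n}"
    using finite_lists_length_eq[of "UNIV::alpha set" n] by simp
  let ?F = "\<lambda>as. foldr (\<circ>) (map (Ltil \<gamma> \<phi>) as) id (\<lambda>x. if x = TR then 1 else 0)"
  have "(\<Sum>as\<in>{as. length as = Suc n}. ?F as x * tensor_entry (map sigma as) a b)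
     = (\<Sum>\<alpha>\<in>UNIV. \<Sum>as\<in>{as. length as = n}. Ltil \<gamma> \<phi> \<alpha> (?F as) x * (sigma \<alpha> a0 b0 * tensor_entry (map sigma as) a' b'))"
    by (simp add: sum_len_Suc ab te_cons)
  also have "\<dots> = (\<Sum>\<alpha>\<in>UNIV. sigma \<alpha> a0 b0 * Ltil \<gamma> \<phi> \<alpha> (\<lambda>y. \<Sum>as\<in>{as. length as = n}. tensor_entry (map sigma as) a' b' * ?F as y) x)"
    by (intro sum.cong refl, subst Ltil_lin[OF fin]) (simp add: sum_distrib_left algebra_simps)
  also have "\<dots> = (\<Sum>\<alpha>\<in>UNIV. sigma \<alpha> a0 b0 * Ltil \<gamma> \<phi> \<alpha> (Ws \<gamma> \<phi> (zip a' b')) x)"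
  proof -
    have "(\<lambda>y. \<Sum>as\<in>{as. length as = n}. tensor_entry (map sigma as) a' b' * ?F as y) = Ws \<gamma> \<phi> (zip a' b')"
      by (intro ext, subst mult.commute, rule Suc.IH[OF ab(3,4)])
    then show ?thesis by simp
  qed
  also have "\<dots> = Ws \<gamma> \<phi> (zip a b) x" by (simp add: ab Top_def)
  finally show ?case .
qed

lemma te_rep: "length a = n \<Longrightarrow> length b = n \<Longrightarrow> tensor_entry (replicate n (sigma A0)) a b = diagc (zip a b)"
proof (induction n arbitrary: a b)
  case 0 then show ?case by (simp add: tensor_entry_def)
next
  case (Suc n)
  then obtain a0 a' b0 b' where ab: "a = a0#a'" "b = b0#b'" "length a' = n" "length b' = n"
    by (metis length_Suc_conv)
  then show ?case using Suc.IH by (simp add: te_cons)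
qed

lemma Mn_eq: "length a = n \<Longrightarrow> length b = n \<Longrightarrow> Mn n a b = mu (zip a b)"
proof (induction n arbitrary: a b)
  case 0 then show ?case by (simp add: Mn_def)
next
  case (Suc n)
  then obtain a0 a' b0 b' where ab: "a = a0#a'" "b = b0#b'" "length a' = n" "length b' = n"
    by (metis length_Suc_conv)
  have "Mn (Suc n) a b = tensor_entry ([sigma Az] @ replicate n (sigma A0)) a b
      + (\<Sum>x=Suc 1..Suc n. tensor_entry (replicate (x - 1) (sigma A0) @ [sigma Az] @ replicate (Suc n - x) (sigma A0)) a b)"
    unfolding Mn_def by (subst sum.atLeast_Suc_atMost) auto
  also have "(\<Sum>x=Suc 1..Suc n. tensor_entry (replicate (x - 1) (sigma A0) @ [sigma Az] @ replicate (Suc n - x) (sigma A0)) a b)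
     = (\<Sum>x=1..n. tensor_entry (replicate (Suc x - 1) (sigma A0) @ [sigma Az] @ replicate (Suc n - Suc x) (sigma A0)) a b)"
    by (rule sum.shift_bounds_cl_Suc_ivl)
  also have "\<dots> = (\<Sum>x=1..n. sigma A0 a0 b0 * tensor_entry (replicate (x - 1) (sigma A0) @ [sigma Az] @ replicate (n - x) (sigma A0)) a' b')"
  proof (intro sum.cong refl)
    fix x assume "x \<in> {1..n}"
    then have "replicate (Suc x - 1) (sigma A0) = sigma A0 # replicate (x - 1) (sigma A0)"
      by (cases x) auto
    then show "tensor_entry (replicate (Suc x - 1) (sigma A0) @ [sigma Az] @ replicate (Suc n - Suc x) (sigma A0)) a b
       = sigma A0 a0 b0 * tensor_entry (replicate (x - 1) (sigma A0) @ [sigma Az] @ replicate (n - x) (sigma A0)) a' b'"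
      by (simp add: ab te_cons)
  qed
  also have "\<dots> = sigma A0 a0 b0 * Mn n a' b'" by (simp add: Mn_def sum_distrib_left)
  finally show ?case using Suc.IH[OF ab(3,4)] te_rep[OF ab(3,4)] by (simp add: ab te_cons)
qed



lemma D1: "(f has_field_derivative f') (at 0) \<Longrightarrow>
  ((\<lambda>s. sin (\<phi> + c * (s - a)) * f s) has_field_derivative
     c * cos (\<phi> + c*(0-a)) * f 0 + sin (\<phi> + c*(0-a)) * f') (at (0::complex))"
  by (auto intro!: derivative_eq_intros simp: algebra_simps)

lemma D2: "(f has_field_derivative f') (at 0) \<Longrightarrow>
  ((\<lambda>s. sin (\<phi> - c * (s - a)) * f s) has_field_derivative
     - c * cos (\<phi> - c*(0-a)) * f 0 + sin (\<phi> - c*(0-a)) * f') (at (0::complex))"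
  by (auto intro!: derivative_eq_intros simp: algebra_simps)

lemma D3: "sin \<gamma> \<noteq> 0 \<Longrightarrow> (f has_field_derivative f') (at 0) \<Longrightarrow>
  ((\<lambda>s. K * (qnum \<gamma> (2*s - a) * f s)) has_field_derivative
     K * (2 * complex_of_real \<gamma> * cos (complex_of_real \<gamma> * (2*0-a)) / complex_of_real (sin \<gamma>) * f 0
       + qnum \<gamma> (2*0 - a) * f')) (at (0::complex))"
  unfolding qnum_def
  by (auto intro!: derivative_eq_intros simp: field_simps)

definition dfun :: "real \<Rightarrow> complex \<Rightarrow> (nat\<times>nat) list \<Rightarrow> nat \<Rightarrow> complex" where
  "dfun \<gamma> \<phi> ps k = (case k of
     0 \<Rightarrow> sin \<phi> ^ length ps * (2 * complex_of_real \<gamma> * complex_of_real (sin \<gamma>) / (sin \<phi>)\<^sup>2 * Ws \<gamma> \<phi> ps TL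
            + complex_of_real \<gamma> * (cos \<phi> / sin \<phi>) * mu ps)
   | Suc m \<Rightarrow> sin \<phi> ^ length ps * (2 * complex_of_real \<gamma> / sin \<phi>) * Ws \<gamma> \<phi> ps (TK m))"

definition Inv :: "real \<Rightarrow> complex \<Rightarrow> (nat\<times>nat) list \<Rightarrow> bool" where
  "Inv \<gamma> \<phi> ps \<longleftrightarrow> Ws \<gamma> \<phi> ps TR = diagc ps
     \<and> (\<forall>k. Vs \<gamma> \<phi> 0 ps k = (if k = 0 then sin \<phi> ^ length ps * diagc ps else 0))
     \<and> (\<forall>k. ((\<lambda>s. Vs \<gamma> \<phi> s ps k) has_field_derivative dfun \<gamma> \<phi> ps k) (at 0))"

lemma Inv_nil: "Inv \<gamma> \<phi> []"
  unfolding Inv_def dfun_def by (auto split: nat.split)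

lemma step11:
  assumes I: "Inv \<gamma> \<phi> ps" and sg: "sin \<gamma> \<noteq> 0" and sp: "sin \<phi> \<noteq> 0"
  shows "Inv \<gamma> \<phi> ((1,1)#ps)"
proof -
  have WR: "Ws \<gamma> \<phi> ps TR = diagc ps"
   and V0: "\<And>k. Vs \<gamma> \<phi> 0 ps k = (if k = 0 then sin \<phi> ^ length ps * diagc ps else 0)"
   and D: "\<And>k. ((\<lambda>s. Vs \<gamma> \<phi> s ps k) has_field_derivative dfun \<gamma> \<phi> ps k) (at 0)"
    using I unfolding Inv_def by auto
  have Wt: "Ws \<gamma> \<phi> ((1,1)#ps) = (\<lambda>x. Ltil \<gamma> \<phi> A0 (Ws \<gamma> \<phi> ps) x + Ltil \<gamma> \<phi> Az (Ws \<gamma> \<phi> ps) x)"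
    by (simp add: Top_def UNIV_alpha sigma_def emat_def)
  have Vt: "\<And>s. Vs \<gamma> \<phi> s ((1,1)#ps) = (\<lambda>k. sin (\<phi> + complex_of_real \<gamma> * (s - of_nat k)) * Vs \<gamma> \<phi> s ps k)"
    by (simp add: Lop_def sz_diag_def)
  have c1: "Ws \<gamma> \<phi> ((1,1)#ps) TR = diagc ((1,1)#ps)"
    using WR unfolding Wt by (simp add: Ltil_def tcos_def tsin_def sigma_def emat_def)
  have c2: "Vs \<gamma> \<phi> 0 ((1,1)#ps) k = (if k = 0 then sin \<phi> ^ length ((1,1)#ps) * diagc ((1,1)#ps) else 0)" for k
    unfolding Vt by (simp add: V0 sigma_def emat_def)
  have c3: "((\<lambda>s. Vs \<gamma> \<phi> s ((1,1)#ps) k) has_field_derivative dfun \<gamma> \<phi> ((1,1)#ps) k) (at 0)" for k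
  proof -
    have d: "((\<lambda>s. Vs \<gamma> \<phi> s ((1,1)#ps) k) has_field_derivative
      complex_of_real \<gamma> * cos (\<phi> + complex_of_real \<gamma>*(0-of_nat k)) * Vs \<gamma> \<phi> 0 ps k
        + sin (\<phi> + complex_of_real \<gamma>*(0-of_nat k)) * dfun \<gamma> \<phi> ps k) (at 0)"
      unfolding Vt by (rule D1[OF D])
    have eq: "complex_of_real \<gamma> * cos (\<phi> + complex_of_real \<gamma>*(0-of_nat k)) * Vs \<gamma> \<phi> 0 ps k
        + sin (\<phi> + complex_of_real \<gamma>*(0-of_nat k)) * dfun \<gamma> \<phi> ps k = dfun \<gamma> \<phi> ((1,1)#ps) k"
    proof (cases k)
      case 0
      then show ?thesis using sp unfolding dfun_def Wt
        by (simp add: V0 Ltil_def tcos_def tsin_def sigma_def emat_def field_simps power2_eq_square)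
    next
      case (Suc m)
      let ?c = "complex_of_real \<gamma>"
      have h1: "sin (\<phi> + ?c*(0 - of_nat k)) = sin \<phi> * cos (?c*(of_nat m+1)) - cos \<phi> * sin (?c*(of_nat m+1))"
        using Suc by (simp add: sin_diff[symmetric] algebra_simps)
      have h2: "cos (?c * tsz_eig m) = cos (?c*(of_nat m+1))" "sin (?c * tsz_eig m) = - sin (?c*(of_nat m+1))"
      proof -
        have e: "?c * tsz_eig m = -(?c*(of_nat m+1))" by (simp add: tsz_eig_def algebra_simps)
        show "cos (?c * tsz_eig m) = cos (?c*(of_nat m+1))" unfolding e by (rule cos_minus)
        show "sin (?c * tsz_eig m) = - sin (?c*(of_nat m+1))" unfolding e by (rule sin_minus)
      qed
      have h3: "cos (tsz_eig m * ?c) = cos (?c*(of_nat m+1))" "sin (tsz_eig m * ?c) = - sin (?c*(of_nat m+1))"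
        using h2 by (simp_all add: mult.commute)
      show ?thesis using sp Suc unfolding dfun_def Wt h1
        by (simp add: V0 Ltil_def tcos_def tsin_def h2 h3 field_simps)
    qed
    from d show ?thesis by (simp only: eq)
  qed
  show ?thesis using c1 c2 c3 unfolding Inv_def by blast
qed

lemma step22:
  assumes I: "Inv \<gamma> \<phi> ps" and sg: "sin \<gamma> \<noteq> 0" and sp: "sin \<phi> \<noteq> 0"
  shows "Inv \<gamma> \<phi> ((2,2)#ps)"
proof -
  have WR: "Ws \<gamma> \<phi> ps TR = diagc ps"
   and V0: "\<And>k. Vs \<gamma> \<phi> 0 ps k = (if k = 0 then sin \<phi> ^ length ps * diagc ps else 0)"
   and D: "\<And>k. ((\<lambda>s. Vs \<gamma> \<phi> s ps k) has_field_derivative dfun \<gamma> \<phi> ps k) (at 0)"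
    using I unfolding Inv_def by auto
  have Wt: "Ws \<gamma> \<phi> ((2,2)#ps) = (\<lambda>x. Ltil \<gamma> \<phi> A0 (Ws \<gamma> \<phi> ps) x - Ltil \<gamma> \<phi> Az (Ws \<gamma> \<phi> ps) x)"
    by (simp add: Top_def UNIV_alpha sigma_def emat_def)
  have Vt: "\<And>s. Vs \<gamma> \<phi> s ((2,2)#ps) = (\<lambda>k. sin (\<phi> - complex_of_real \<gamma> * (s - of_nat k)) * Vs \<gamma> \<phi> s ps k)"
    by (simp add: Lop_def sz_diag_def)
  have c1: "Ws \<gamma> \<phi> ((2,2)#ps) TR = diagc ((2,2)#ps)"
    using WR unfolding Wt by (simp add: Ltil_def tcos_def tsin_def sigma_def emat_def)
  have c2: "Vs \<gamma> \<phi> 0 ((2,2)#ps) k = (if k = 0 then sin \<phi> ^ length ((2,2)#ps) * diagc ((2,2)#ps) else 0)" for k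
    unfolding Vt by (simp add: V0 sigma_def emat_def)
  have c3: "((\<lambda>s. Vs \<gamma> \<phi> s ((2,2)#ps) k) has_field_derivative dfun \<gamma> \<phi> ((2,2)#ps) k) (at 0)" for k
  proof -
    have d: "((\<lambda>s. Vs \<gamma> \<phi> s ((2,2)#ps) k) has_field_derivative
      - complex_of_real \<gamma> * cos (\<phi> - complex_of_real \<gamma>*(0-of_nat k)) * Vs \<gamma> \<phi> 0 ps k
        + sin (\<phi> - complex_of_real \<gamma>*(0-of_nat k)) * dfun \<gamma> \<phi> ps k) (at 0)"
      unfolding Vt by (rule D2[OF D])
    have eq: "- complex_of_real \<gamma> * cos (\<phi> - complex_of_real \<gamma>*(0-of_nat k)) * Vs \<gamma> \<phi> 0 ps k
        + sin (\<phi> - complex_of_real \<gamma>*(0-of_nat k)) * dfun \<gamma> \<phi> ps k = dfun \<gamma> \<phi> ((2,2)#ps) k"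
    proof (cases k)
      case 0
      then show ?thesis using sp unfolding dfun_def Wt
        by (simp add: V0 Ltil_def tcos_def tsin_def sigma_def emat_def field_simps power2_eq_square)
    next
      case (Suc m)
      let ?c = "complex_of_real \<gamma>"
      have h1: "sin (\<phi> - ?c*(0 - of_nat k)) = sin \<phi> * cos (?c*(of_nat m+1)) + cos \<phi> * sin (?c*(of_nat m+1))"
        using Suc by (simp add: sin_add algebra_simps)
      have h2: "cos (?c * tsz_eig m) = cos (?c*(of_nat m+1))" "sin (?c * tsz_eig m) = - sin (?c*(of_nat m+1))"
      proof -
        have e: "?c * tsz_eig m = -(?c*(of_nat m+1))" by (simp add: tsz_eig_def algebra_simps)
        show "cos (?c * tsz_eig m) = cos (?c*(of_nat m+1))" unfolding e by (rule cos_minus)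
        show "sin (?c * tsz_eig m) = - sin (?c*(of_nat m+1))" unfolding e by (rule sin_minus)
      qed
      have h3: "cos (tsz_eig m * ?c) = cos (?c*(of_nat m+1))" "sin (tsz_eig m * ?c) = - sin (?c*(of_nat m+1))"
        using h2 by (simp_all add: mult.commute)
      show ?thesis using sp Suc unfolding dfun_def Wt h1
        by (simp add: V0 Ltil_def tcos_def tsin_def h2 h3 field_simps)
    qed
    from d show ?thesis by (simp only: eq)
  qed
  show ?thesis using c1 c2 c3 unfolding Inv_def by blast
qed

lemma qnum1: "sin \<gamma> \<noteq> 0 \<Longrightarrow> qnum \<gamma> 1 = 1"
  unfolding qnum_def by (simp add: sin_of_real)

lemma qnum0: "qnum \<gamma> 0 = 0"
  unfolding qnum_def by simp

lemma step12:
  assumes I: "Inv \<gamma> \<phi> ps" and sg: "sin \<gamma> \<noteq> 0" and sp: "sin \<phi> \<noteq> 0"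
  shows "Inv \<gamma> \<phi> ((1,2)#ps)"
proof -
  have WR: "Ws \<gamma> \<phi> ps TR = diagc ps"
   and V0: "\<And>k. Vs \<gamma> \<phi> 0 ps k = (if k = 0 then sin \<phi> ^ length ps * diagc ps else 0)"
   and D: "\<And>k. ((\<lambda>s. Vs \<gamma> \<phi> s ps k) has_field_derivative dfun \<gamma> \<phi> ps k) (at 0)"
    using I unfolding Inv_def by auto
  have Wt: "Ws \<gamma> \<phi> ((1,2)#ps) = Ltil \<gamma> \<phi> Ap (Ws \<gamma> \<phi> ps)"
    by (rule ext) (simp add: Top_def UNIV_alpha sigma_def emat_def)
  have Vt0: "\<And>s. Vs \<gamma> \<phi> s ((1,2)#ps) 0 = 0"
    by (simp add: Lop_def sminus_def)
  have VtS: "\<And>s m. Vs \<gamma> \<phi> s ((1,2)#ps) (Suc m) = complex_of_real (sin \<gamma>) * (qnum \<gamma> (2*s - of_nat m) * Vs \<gamma> \<phi> s ps m)"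
    by (simp add: Lop_def sminus_def)
  have dg: "diagc ((1,2)#ps) = 0" "mu ((1,2)#ps) = 0" by (simp_all add: sigma_def emat_def)
  have c1: "Ws \<gamma> \<phi> ((1,2)#ps) TR = diagc ((1,2)#ps)"
    unfolding Wt dg by (simp add: Ltil_def tsminus_def)
  have c2: "Vs \<gamma> \<phi> 0 ((1,2)#ps) k = (if k = 0 then sin \<phi> ^ length ((1,2)#ps) * diagc ((1,2)#ps) else 0)" for k
  proof (cases k)
    case 0 then show ?thesis unfolding 0 by (subst Vt0) (simp add: sigma_def emat_def)
  next
    case (Suc m) then show ?thesis unfolding Suc VtS dg by (cases m) (simp_all add: V0 qnum0)
  qed
  have c3: "((\<lambda>s. Vs \<gamma> \<phi> s ((1,2)#ps) k) has_field_derivative dfun \<gamma> \<phi> ((1,2)#ps) k) (at 0)" for k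
  proof (cases k)
    case 0
    have "dfun \<gamma> \<phi> ((1,2)#ps) 0 = 0"
      unfolding dfun_def Wt dg by (simp add: Ltil_def tsminus_def)
    then show ?thesis using 0 Vt0 by simp
  next
    case (Suc m)
    let ?c = "complex_of_real \<gamma>"
    have d: "((\<lambda>s. Vs \<gamma> \<phi> s ((1,2)#ps) k) has_field_derivative
      complex_of_real (sin \<gamma>) * (2 * ?c * cos (?c * (2*0 - of_nat m)) / complex_of_real (sin \<gamma>) * Vs \<gamma> \<phi> 0 ps m
       + qnum \<gamma> (2*0 - of_nat m) * dfun \<gamma> \<phi> ps m)) (at 0)"
      unfolding Suc VtS by (rule D3[OF sg D])
    have eq: "complex_of_real (sin \<gamma>) * (2 * ?c * cos (?c * (2*0 - of_nat m)) / complex_of_real (sin \<gamma>) * Vs \<gamma> \<phi> 0 ps m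
       + qnum \<gamma> (2*0 - of_nat m) * dfun \<gamma> \<phi> ps m) = dfun \<gamma> \<phi> ((1,2)#ps) k"
    proof (cases m)
      case 0
      then show ?thesis using sp sg Suc unfolding dfun_def Wt
        by (simp add: V0 qnum0 WR Ltil_def tsminus_def field_simps)
    next
      case (Suc m')
      then show ?thesis using sp sg \<open>k = Suc m\<close> unfolding dfun_def Wt
        by (simp add: V0 Ltil_def tsminus_def field_simps)
    qed
    from d show ?thesis by (simp only: eq)
  qed
  show ?thesis using c1 c2 c3 unfolding Inv_def by blast
qed

lemma step21:
  assumes I: "Inv \<gamma> \<phi> ps" and sg: "sin \<gamma> \<noteq> 0" and sp: "sin \<phi> \<noteq> 0"
  shows "Inv \<gamma> \<phi> ((2,1)#ps)"
proof -
  have WR: "Ws \<gamma> \<phi> ps TR = diagc ps"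
   and V0: "\<And>k. Vs \<gamma> \<phi> 0 ps k = (if k = 0 then sin \<phi> ^ length ps * diagc ps else 0)"
   and D: "\<And>k. ((\<lambda>s. Vs \<gamma> \<phi> s ps k) has_field_derivative dfun \<gamma> \<phi> ps k) (at 0)"
    using I unfolding Inv_def by auto
  have Wt: "Ws \<gamma> \<phi> ((2,1)#ps) = Ltil \<gamma> \<phi> Am (Ws \<gamma> \<phi> ps)"
    by (rule ext) (simp add: Top_def UNIV_alpha sigma_def emat_def)
  have Vt: "\<And>s k. Vs \<gamma> \<phi> s ((2,1)#ps) k = complex_of_real (sin \<gamma>) * (qnum \<gamma> (of_nat k + 1) * Vs \<gamma> \<phi> s ps (Suc k))"
    by (simp add: Lop_def splus_def)
  have dg: "diagc ((2,1)#ps) = 0" "mu ((2,1)#ps) = 0" by (simp_all add: sigma_def emat_def)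
  have c1: "Ws \<gamma> \<phi> ((2,1)#ps) TR = diagc ((2,1)#ps)"
    unfolding Wt dg by (simp add: Ltil_def tsplus_def)
  have c2: "Vs \<gamma> \<phi> 0 ((2,1)#ps) k = (if k = 0 then sin \<phi> ^ length ((2,1)#ps) * diagc ((2,1)#ps) else 0)" for k
    unfolding Vt dg by (simp add: V0)
  have c3: "((\<lambda>s. Vs \<gamma> \<phi> s ((2,1)#ps) k) has_field_derivative dfun \<gamma> \<phi> ((2,1)#ps) k) (at 0)" for k
  proof -
    have d: "((\<lambda>s. Vs \<gamma> \<phi> s ((2,1)#ps) k) has_field_derivative
      complex_of_real (sin \<gamma>) * (qnum \<gamma> (of_nat k + 1) * dfun \<gamma> \<phi> ps (Suc k))) (at 0)"
      unfolding Vt by (intro DERIV_cmult D)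
    have eq: "complex_of_real (sin \<gamma>) * (qnum \<gamma> (of_nat k + 1) * dfun \<gamma> \<phi> ps (Suc k)) = dfun \<gamma> \<phi> ((2,1)#ps) k"
    proof (cases k)
      case 0
      then show ?thesis using sp sg unfolding dfun_def Wt dg
        by (simp add: qnum1 Ltil_def tsplus_def field_simps power2_eq_square)
    next
      case (Suc m)
      have e: "(of_nat k + 1 :: complex) = of_nat m + 2" using Suc by simp
      show ?thesis using sp sg Suc unfolding dfun_def Wt e
        by (simp add: Ltil_def tsplus_def field_simps)
    qed
    from d show ?thesis by (simp only: eq)
  qed
  show ?thesis using c1 c2 c3 unfolding Inv_def by blast
qed

lemma Inv_all: "\<forall>(i,j)\<in>set ps. i \<in> {1,2} \<and> j \<in> {1,2} \<Longrightarrow> sin \<gamma> \<noteq> 0 \<Longrightarrow> sin \<phi> \<noteq> 0 \<Longrightarrow> Inv \<gamma> \<phi> ps"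
proof (induction ps)
  case Nil then show ?case by (simp add: Inv_nil)
next
  case (Cons p ps)
  obtain i j where p: "p = (i,j)" by fastforce
  have I: "Inv \<gamma> \<phi> ps" using Cons by auto
  have "i \<in> {1,2}" "j \<in> {1,2}" using Cons.prems p by auto
  then show ?case using step11[OF I] step12[OF I] step21[OF I] step22[OF I] Cons.prems p by auto
qed

theorem mainTheorem3:
  fixes \<gamma> :: real and \<phi> :: complex and n :: nat
  assumes "sin \<gamma> \<noteq> 0" and "sin \<phi> \<noteq> 0" and "n \<ge> 1"
  shows "\<forall>a\<in>idxs n. \<forall>b\<in>idxs n.
    ((\<lambda>s. Wn \<gamma> n \<phi> s a b / sin \<phi> ^ n) has_field_derivative
       (2 * complex_of_real \<gamma> * complex_of_real (sin \<gamma>) / (sin \<phi>)\<^sup>2 * Zn \<gamma> n \<phi> a b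
        + complex_of_real \<gamma> * (cos \<phi> / sin \<phi>) * Mn n a b)) (at 0)"
proof (intro ballI)
  fix a b assume a: "a \<in> idxs n" and b: "b \<in> idxs n"
  have la: "length a = n" "set a \<subseteq> {1,2}" and lb: "length b = n" "set b \<subseteq> {1,2}"
    using a b by (auto simp: idxs_def)
  let ?ps = "zip a b"
  have set: "\<forall>(i,j)\<in>set ?ps. i \<in> {1,2} \<and> j \<in> {1,2}"
    using la lb by (auto dest: set_zip_leftD set_zip_rightD)
  have lps: "length ?ps = n" using la lb by simp
  have I: "Inv \<gamma> \<phi> ?ps" by (rule Inv_all[OF set assms(1,2)])
  then have D: "((\<lambda>s. Vs \<gamma> \<phi> s ?ps 0) has_field_derivative dfun \<gamma> \<phi> ?ps 0) (at 0)"
    unfolding Inv_def by blast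
  have D2: "((\<lambda>s. Vs \<gamma> \<phi> s ?ps 0 / sin \<phi> ^ n) has_field_derivative dfun \<gamma> \<phi> ?ps 0 / sin \<phi> ^ n) (at 0)"
    by (rule DERIV_cdivide[OF D])
  have Z: "Zn \<gamma> n \<phi> a b = Ws \<gamma> \<phi> ?ps TL"
    unfolding Zn_def LR_elem_def by (rule Zn_gen[OF la(1) lb(1)])
  have M: "Mn n a b = mu ?ps" by (rule Mn_eq[OF la(1) lb(1)])
  have eq: "dfun \<gamma> \<phi> ?ps 0 / sin \<phi> ^ n =
      2 * complex_of_real \<gamma> * complex_of_real (sin \<gamma>) / (sin \<phi>)\<^sup>2 * Zn \<gamma> n \<phi> a b
        + complex_of_real \<gamma> * (cos \<phi> / sin \<phi>) * Mn n a b"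
    unfolding Z M dfun_def lps using assms(2) by simp
  have W: "(\<lambda>s. Wn \<gamma> n \<phi> s a b / sin \<phi> ^ n) = (\<lambda>s. Vs \<gamma> \<phi> s ?ps 0 / sin \<phi> ^ n)"
    using Wn_eq[OF a b] by simp
  show "((\<lambda>s. Wn \<gamma> n \<phi> s a b / sin \<phi> ^ n) has_field_derivative
       (2 * complex_of_real \<gamma> * complex_of_real (sin \<gamma>) / (sin \<phi>)\<^sup>2 * Zn \<gamma> n \<phi> a b
        + complex_of_real \<gamma> * (cos \<phi> / sin \<phi>) * Mn n a b)) (at 0)"
    unfolding W eq[symmetric] by (rule D2)
qed

end
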